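(* Let $m$ and $n_1,\ldots,n_t$ be positive integers such that for every $1\leq i\leq t$, $n_i$ is even and $m\geq n_i\geq 2 \lceil \log (81^{t-1}m)\rceil+1$. Then $BR(C_{n_1},\ldots,C_{n_t},K_{m,m})\leq 81^{t}m$.
   Context: $C_k$ is the cycle on $k$ vertices and $K_{m,m}$ the complete bipartite graph with both parts of size $m$. For bipartite graphs $G_1,\ldots,G_k$, the bipartite Ramsey number $BR(G_1,\ldots,G_k)$ is the smallest integer $b$ such that for every coloring of the edges of $K_{b,b}$ with colors $1,\ldots,k$ there is, for some $i$, a copy of $G_i$ all of whose edges have color $i$. $\log$ denotes the logarithm to base $2$. *)

theory Defs
  imports Complex_Main
begin

text \<open>The complete bipartite graph K_{b,b}: vertices Inl x (left part) and Inr y (right part)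
  with x, y < b.  An edge coloring is a function c with c x y the color of the edge
  between Inl x and Inr y.  Colors are 0..t-1 (the cycles) and t (the K_{m,m}).\<close>

definition col_adj :: "(nat \<Rightarrow> nat \<Rightarrow> nat) \<Rightarrow> nat \<Rightarrow> nat \<Rightarrow> nat + nat \<Rightarrow> nat + nat \<Rightarrow> bool" where
  "col_adj c b k u v =
     (case (u, v) of
        (Inl x, Inr y) \<Rightarrow> x < b \<and> y < b \<and> c x y = k
      | (Inr y, Inl x) \<Rightarrow> x < b \<and> y < b \<and> c x y = k
      | _ \<Rightarrow> False)"

definition has_mono_cycle :: "(nat \<Rightarrow> nat \<Rightarrow> nat) \<Rightarrow> nat \<Rightarrow> nat \<Rightarrow> nat \<Rightarrow> bool" where
  "has_mono_cycle c b k n =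
     (n \<ge> 3 \<and> (\<exists>f :: nat \<Rightarrow> nat + nat. inj_on f {..<n} \<and>
        (\<forall>j<n. col_adj c b k (f j) (f (Suc j mod n)))))"

definition has_mono_Kmm :: "(nat \<Rightarrow> nat \<Rightarrow> nat) \<Rightarrow> nat \<Rightarrow> nat \<Rightarrow> nat \<Rightarrow> bool" where
  "has_mono_Kmm c b k m =
     (\<exists>A B. A \<subseteq> {..<b} \<and> B \<subseteq> {..<b} \<and> card A = m \<and> card B = m \<and>
        (\<forall>x\<in>A. \<forall>y\<in>B. c x y = k))"

definition BR_arrows :: "nat \<Rightarrow> (nat \<Rightarrow> nat) \<Rightarrow> nat \<Rightarrow> nat \<Rightarrow> bool" where
  "BR_arrows t n m b =
     (\<forall>c :: nat \<Rightarrow> nat \<Rightarrow> nat. (\<forall>x<b. \<forall>y<b. c x y \<le> t) \<longrightarrow>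
        (\<exists>i<t. has_mono_cycle c b i (n i)) \<or> has_mono_Kmm c b t m)"

definition BR_cycles_Kmm :: "nat \<Rightarrow> (nat \<Rightarrow> nat) \<Rightarrow> nat \<Rightarrow> nat" where
  "BR_cycles_Kmm t n m = (LEAST b. BR_arrows t n m b)"

end

theory Submission
  imports Defs
begin


definition bipg :: "('v \<Rightarrow> 'v \<Rightarrow> bool) \<Rightarrow> 'v set \<Rightarrow> 'v set \<Rightarrow> bool" where
  "bipg adj P Q \<longleftrightarrow> P \<inter> Q = {} \<and> (\<forall>u v. adj u v \<longrightarrow> adj v u) \<and>
     (\<forall>u v. adj u v \<longrightarrow> (u \<in> P \<and> v \<in> Q) \<or> (u \<in> Q \<and> v \<in> P))"

definition dense :: "('v \<Rightarrow> 'v \<Rightarrow> bool) \<Rightarrow> nat \<Rightarrow> 'v set \<Rightarrow> 'v set \<Rightarrow> bool" where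
  "dense adj M P Q \<longleftrightarrow> (\<forall>A B. A \<subseteq> P \<longrightarrow> B \<subseteq> Q \<longrightarrow> M \<le> card A \<longrightarrow> M \<le> card B \<longrightarrow>
      (\<exists>a\<in>A. \<exists>b\<in>B. adj a b))"

definition Nb :: "('v \<Rightarrow> 'v \<Rightarrow> bool) \<Rightarrow> 'v set \<Rightarrow> 'v set" where
  "Nb adj S = {v. \<exists>u\<in>S. adj u v}"

lemma bipg_swap: "bipg adj P Q \<Longrightarrow> bipg adj Q P"
  unfolding bipg_def by blast

lemma dense_swap: "bipg adj P Q \<Longrightarrow> dense adj M P Q \<Longrightarrow> dense adj M Q P"
  unfolding bipg_def dense_def by metis

lemma nb_big:
  assumes "dense adj M P Q" "A \<subseteq> P" "M \<le> card A"
  shows "card (Q - Nb adj A) < M"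
proof (rule ccontr)
  assume "\<not> card (Q - Nb adj A) < M"
  then obtain a b where "a \<in> A" "b \<in> Q - Nb adj A" "adj a b"
    using assms unfolding dense_def by (meson Diff_subset not_less)
  then show False unfolding Nb_def by blast
qed

lemma nb_sub: "Nb adj A \<subseteq> P \<union> Q" if "bipg adj P Q"
  using that unfolding bipg_def Nb_def by blast

lemma alt_side:
  assumes "bipg adj P Q" "successively adj xs" "xs \<noteq> []" "hd xs \<in> P" "i < length xs"
  shows "xs ! i \<in> (if even i then P else Q)"
  using assms(5)
proof (induction i)
  case 0
  then show ?case using assms(3,4) by (simp add: hd_conv_nth)
next
  case (Suc i)
  then have "adj (xs ! i) (xs ! Suc i)" using successively_nth[OF assms(2)] by blast
  moreover have "xs ! i \<in> (if even i then P else Q)" using Suc by simp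
  ultimately show ?case using assms(1) unfolding bipg_def by (fastforce simp: disjoint_iff)
qed

definition tree :: "('v \<Rightarrow> 'v \<Rightarrow> bool) \<Rightarrow> 'v \<Rightarrow> nat \<Rightarrow> 'v set \<Rightarrow> 'v set \<Rightarrow> bool" where
  "tree adj a t A F \<longleftrightarrow> a \<in> F \<and> A \<subseteq> F \<and> (\<forall>u\<in>A. \<exists>xs. length xs = Suc t \<and> hd xs = a \<and>
      last xs = u \<and> distinct xs \<and> set xs \<subseteq> F \<and> successively adj xs)"

lemma tree0: "tree adj a 0 {a} {a}"
  unfolding tree_def by (intro conjI ballI exI[of _ "[a]"]) auto

lemma tree_step:
  assumes "tree adj a t A F" "A' \<subseteq> Nb adj A - G" "F \<subseteq> G"
  shows "tree adj a (Suc t) A' (F \<union> A')"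
  unfolding tree_def
proof (intro conjI ballI)
  show "a \<in> F \<union> A'" using assms(1) unfolding tree_def by blast
  show "A' \<subseteq> F \<union> A'" by blast
  fix u' assume u': "u' \<in> A'"
  then obtain u where u: "u \<in> A" "adj u u'" using assms(2) unfolding Nb_def by blast
  then obtain xs where xs: "length xs = Suc t" "hd xs = a" "last xs = u" "distinct xs"
    "set xs \<subseteq> F" "successively adj xs" using assms(1) unfolding tree_def by blast
  have ne: "xs \<noteq> []" using xs(1) by auto
  have "u' \<notin> set xs" using xs(5) assms(2,3) u' by blast
  then show "\<exists>xs. length xs = Suc (Suc t) \<and> hd xs = a \<and> last xs = u' \<and> distinct xs \<and>
      set xs \<subseteq> F \<union> A' \<and> successively adj xs"
    using xs ne u u' by (intro exI[of _ "xs @ [u']"]) (auto simp: successively_append_iff)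
qed

lemma nb_mono: "A \<subseteq> B \<Longrightarrow> Nb adj A \<subseteq> Nb adj B"
  unfolding Nb_def by blast

definition expd :: "('v \<Rightarrow> 'v \<Rightarrow> bool) \<Rightarrow> nat \<Rightarrow> 'v set \<Rightarrow> 'v set \<Rightarrow> bool" where
  "expd adj M V R \<longleftrightarrow> (\<forall>S. S \<subseteq> V - R \<longrightarrow> S \<noteq> {} \<longrightarrow> card S \<le> M \<longrightarrow>
      8 * card S \<le> card (Nb adj S - R))"

lemma grow_step:
  assumes bg: "bipg adj P Q" and fin: "finite (P \<union> Q)" and ex: "expd adj M (P \<union> Q) R"
    and ta: "tree adj a t A Fa" and tb: "tree adj b t B Fb"
    and cA: "card A = s" and cB: "card B = s" and cFa: "card Fa \<le> 2*s" and cFb: "card Fb \<le> 2*s"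
    and dj: "Fa \<inter> Fb = {}" and sa: "Fa \<subseteq> P \<union> Q - R" and sb: "Fb \<subseteq> P \<union> Q - R"
    and s1: "1 \<le> s" and sM: "s \<le> M" and x2: "x \<le> 2*s"
  shows "\<exists>A' B' Fa' Fb'. tree adj a (Suc t) A' Fa' \<and> tree adj b (Suc t) B' Fb' \<and>
      card A' = x \<and> card B' = x \<and> card Fa' \<le> 2*s + x \<and> card Fb' \<le> 2*s + x \<and>
      Fa' \<inter> Fb' = {} \<and> Fa' \<subseteq> P \<union> Q - R \<and> Fb' \<subseteq> P \<union> Q - R"
proof -
  have finFa: "finite Fa" using sa fin finite_subset by blast
  have finFb: "finite Fb" using sb fin finite_subset by blast
  have AF: "A \<subseteq> Fa" using ta unfolding tree_def by blast
  have BF: "B \<subseteq> Fb" using tb unfolding tree_def by blast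
  have Ane: "A \<noteq> {}" using cA s1 by auto
  have Bne: "B \<noteq> {}" using cB s1 by auto
  have eA: "8 * s \<le> card (Nb adj A - R)" using ex AF sa Ane cA sM unfolding expd_def by blast
  have eB: "8 * s \<le> card (Nb adj B - R)" using ex BF sb Bne cB sM unfolding expd_def by blast
  have "card (Nb adj A - R) - card (Fa \<union> Fb) \<le> card (Nb adj A - R - (Fa \<union> Fb))"
    by (rule diff_card_le_card_Diff) (use finFa finFb in auto)
  moreover have "card (Fa \<union> Fb) \<le> 4 * s" using card_Un_le[of Fa Fb] cFa cFb by linarith
  ultimately have "x \<le> card (Nb adj A - R - (Fa \<union> Fb))" using eA x2 by linarith
  then obtain A' where A': "A' \<subseteq> Nb adj A - R - (Fa \<union> Fb)" "card A' = x" "finite A'"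
    using obtain_subset_with_card_n by metis
  have ta': "tree adj a (Suc t) A' (Fa \<union> A')"
    by (rule tree_step[OF ta, of _ "Fa \<union> Fb"]) (use A' in auto)
  have cFa': "card (Fa \<union> A') \<le> 2*s + x" using card_Un_le[of Fa A'] cFa A'(2) by linarith
  have "card (Nb adj B - R) - card ((Fa \<union> A') \<union> Fb) \<le> card (Nb adj B - R - ((Fa \<union> A') \<union> Fb))"
    by (rule diff_card_le_card_Diff) (use finFa finFb A'(3) in auto)
  moreover have "card ((Fa \<union> A') \<union> Fb) \<le> 2*s + x + 2*s"
    using card_Un_le[of "Fa \<union> A'" Fb] cFa' cFb by linarith
  ultimately have "x \<le> card (Nb adj B - R - ((Fa \<union> A') \<union> Fb))" using eB x2 by linarith
  then obtain B' where B': "B' \<subseteq> Nb adj B - R - ((Fa \<union> A') \<union> Fb)" "card B' = x" "finite B'"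
    using obtain_subset_with_card_n by metis
  have tb': "tree adj b (Suc t) B' (Fb \<union> B')"
    by (rule tree_step[OF tb, of _ "(Fa \<union> A') \<union> Fb"]) (use B' in auto)
  have cFb': "card (Fb \<union> B') \<le> 2*s + x" using card_Un_le[of Fb B'] cFb B'(2) by linarith
  have nA: "Nb adj A \<subseteq> P \<union> Q" "Nb adj B \<subseteq> P \<union> Q" using nb_sub[OF bg] by auto
  show ?thesis
    apply (rule exI[of _ A'], rule exI[of _ B'], rule exI[of _ "Fa \<union> A'"], rule exI[of _ "Fb \<union> B'"])
    using ta' tb' A' B' cFa' cFb' dj sa sb nA by blast
qed

lemma grow_pow:
  assumes bg: "bipg adj P Q" and fin: "finite (P \<union> Q)" and ex: "expd adj M (P \<union> Q) R"
    and a: "a \<in> P - R" and b: "b \<in> Q - R"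
  shows "2^t \<le> M \<Longrightarrow> \<exists>A B Fa Fb. tree adj a t A Fa \<and> tree adj b t B Fb \<and>
      card A = 2^t \<and> card B = 2^t \<and> card Fa \<le> 2*2^t \<and> card Fb \<le> 2*2^t \<and>
      Fa \<inter> Fb = {} \<and> Fa \<subseteq> P \<union> Q - R \<and> Fb \<subseteq> P \<union> Q - R"
proof (induction t)
  case 0
  have "a \<noteq> b" using a b bg unfolding bipg_def by blast
  then show ?case using a b tree0
    by (intro exI[of _ "{a}"] exI[of _ "{b}"]) auto
next
  case (Suc t)
  then have "2^t \<le> M" by simp
  then obtain A B Fa Fb where h: "tree adj a t A Fa" "tree adj b t B Fb"
      "card A = 2^t" "card B = 2^t" "card Fa \<le> 2*2^t" "card Fb \<le> 2*2^t"
      "Fa \<inter> Fb = {}" "Fa \<subseteq> P \<union> Q - R" "Fb \<subseteq> P \<union> Q - R" using Suc.IH by blast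
  have "2^t \<le> M" using Suc.prems by simp
  from grow_step[OF bg fin ex h, of "2*2^t"] this show ?case by simp
qed

lemma grow_final:
  assumes bg: "bipg adj P Q" and fin: "finite (P \<union> Q)" and ex: "expd adj M (P \<union> Q) R"
    and a: "a \<in> P - R" and b: "b \<in> Q - R" and M1: "1 \<le> M" and Mk: "M \<le> 2^kk"
  shows "\<exists>j A B Fa Fb. j \<le> kk \<and> tree adj a j A Fa \<and> tree adj b j B Fb \<and>
      card A = M \<and> card B = M \<and> card Fa \<le> 3*M \<and> card Fb \<le> 3*M \<and>
      Fa \<inter> Fb = {} \<and> Fa \<subseteq> P \<union> Q - R \<and> Fb \<subseteq> P \<union> Q - R"
proof -
  define j where "j = (LEAST j. M \<le> 2^j)"
  have jk: "j \<le> kk" unfolding j_def by (rule Least_le) (rule Mk)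
  have Mj: "M \<le> 2^j" unfolding j_def by (rule LeastI) (rule Mk)
  show ?thesis
  proof (cases j)
    case 0
    then have "M = 1" using Mj M1 by simp
    then show ?thesis using grow_pow[OF bg fin ex a b, of 0] jk 0 by fastforce
  next
    case (Suc j')
    have lt: "\<not> M \<le> 2^j'" unfolding j_def by (rule not_less_Least) (simp add: j_def[symmetric] Suc)
    then obtain A B Fa Fb where h: "tree adj a j' A Fa" "tree adj b j' B Fb"
      "card A = 2^j'" "card B = 2^j'" "card Fa \<le> 2*2^j'" "card Fb \<le> 2*2^j'"
      "Fa \<inter> Fb = {}" "Fa \<subseteq> P \<union> Q - R" "Fb \<subseteq> P \<union> Q - R"
      using grow_pow[OF bg fin ex a b, of j'] by fastforce
    have x2: "M \<le> 2 * 2^j'" using Mj Suc by simp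
    from grow_step[OF bg fin ex h _ _ x2] lt
    obtain A' B' Fa' Fb' where g: "tree adj a (Suc j') A' Fa'" "tree adj b (Suc j') B' Fb'"
      "card A' = M" "card B' = M" "card Fa' \<le> 2*2^j' + M" "card Fb' \<le> 2*2^j' + M"
      "Fa' \<inter> Fb' = {}" "Fa' \<subseteq> P \<union> Q - R" "Fb' \<subseteq> P \<union> Q - R" by fastforce
    have "2*2^j' + M \<le> 3*M" using lt by simp
    then show ?thesis using g jk Suc by (intro exI[of _ "Suc j'"]) fastforce
  qed
qed

lemma nb_big_card:
  assumes bg: "bipg adj P Q" and fQ: "finite Q" and dn: "dense adj M P Q" and AP: "A \<subseteq> P"
    and MA: "M \<le> card A" and NQ: "N \<le> card Q"
  shows "N < card (Nb adj A) + M"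
proof -
  have "card (Q - Nb adj A) < M" using nb_big[OF dn AP MA] .
  moreover have "card Q \<le> card (Q - Nb adj A) + card (Nb adj A)"
  proof -
    have "Q \<subseteq> (Q - Nb adj A) \<union> (Q \<inter> Nb adj A)" by blast
    then have "card Q \<le> card ((Q - Nb adj A) \<union> (Q \<inter> Nb adj A))"
      by (rule card_mono[rotated]) (use fQ in auto)
    also have "\<dots> \<le> card (Q - Nb adj A) + card (Q \<inter> Nb adj A)" by (rule card_Un_le)
    also have "card (Q \<inter> Nb adj A) \<le> card (Nb adj A)"
    proof (cases "finite (Nb adj A)")
      case True then show ?thesis by (intro card_mono) auto
    next
      case False
      have "Nb adj A \<subseteq> Q"
        using bg AP unfolding bipg_def Nb_def by blast
      then show ?thesis using False fQ finite_subset by blast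
    qed
    finally show ?thesis by simp
  qed
  ultimately show ?thesis using NQ by linarith
qed

lemma big_set_nb:
  assumes bg: "bipg adj P Q" and fP: "finite P" and fQ: "finite Q" and dn: "dense adj M P Q"
    and NP: "N \<le> card P" and NQ: "N \<le> card Q" and X: "X \<subseteq> P \<union> Q" and MX: "2*M \<le> card X"
  shows "N < card (Nb adj X) + M"
proof -
  have fX: "finite X" using X fP fQ finite_subset by blast
  have "X = (X \<inter> P) \<union> (X \<inter> Q)" using X by blast
  moreover have "(X \<inter> P) \<inter> (X \<inter> Q) = {}" using bg unfolding bipg_def by blast
  ultimately have "card X = card (X \<inter> P) + card (X \<inter> Q)"
    using fX by (metis card_Un_disjoint finite_Int)
  then have "M \<le> card (X \<inter> P) \<or> M \<le> card (X \<inter> Q)" using MX by linarith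
  have fN: "finite (Nb adj X)" using nb_sub[OF bg, of X] fP fQ finite_subset by blast
  from \<open>M \<le> card (X \<inter> P) \<or> M \<le> card (X \<inter> Q)\<close> show ?thesis
  proof
    assume "M \<le> card (X \<inter> P)"
    then have "N < card (Nb adj (X \<inter> P)) + M" using nb_big_card[OF bg fQ dn _ _ NQ] by blast
    moreover have "card (Nb adj (X \<inter> P)) \<le> card (Nb adj X)" by (rule card_mono[OF fN nb_mono]) blast
    ultimately show ?thesis by linarith
  next
    assume "M \<le> card (X \<inter> Q)"
    then have "N < card (Nb adj (X \<inter> Q)) + M"
      using nb_big_card[OF bipg_swap[OF bg] fP dense_swap[OF bg dn] _ _ NP] by blast
    moreover have "card (Nb adj (X \<inter> Q)) \<le> card (Nb adj X)" by (rule card_mono[OF fN nb_mono]) blast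
    ultimately show ?thesis by linarith
  qed
qed

lemma nb_Un: "Nb adj (A \<union> B) = Nb adj A \<union> Nb adj B"
  unfolding Nb_def by blast

lemma clean:
  assumes bg: "bipg adj P Q" and fP: "finite P" and fQ: "finite Q" and dn: "dense adj M P Q"
    and NP: "N \<le> card P" and NQ: "N \<le> card Q" and NM: "28*M \<le> N" and M1: "1 \<le> M"
  shows "\<exists>R. R \<subseteq> P \<union> Q \<and> card R < 2*M \<and> expd adj M (P \<union> Q) R"
proof -
  define Good where "Good R \<longleftrightarrow> R \<subseteq> P \<union> Q \<and> card R < 2*M \<and> card (Nb adj R - R) \<le> 8 * card R"
    for R
  have "Good {}" unfolding Good_def Nb_def using M1 by auto
  moreover have "\<forall>R. Good R \<longrightarrow> card R < 2*M" unfolding Good_def by blast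
  ultimately obtain R where R: "Good R" and Rmax: "\<forall>R'. Good R' \<longrightarrow> card R' \<le> card R"
    using ex_has_greatest_nat[of Good "{}" card "2*M"] by blast
  have RV: "R \<subseteq> P \<union> Q" and cR: "card R < 2*M" and eR: "card (Nb adj R - R) \<le> 8 * card R"
    using R unfolding Good_def by auto
  have fV: "finite (P \<union> Q)" using fP fQ by blast
  have fR: "finite R" using RV fV finite_subset by blast
  have "expd adj M (P \<union> Q) R"
    unfolding expd_def
  proof (intro allI impI)
    fix S assume SV: "S \<subseteq> P \<union> Q - R" and Sne: "S \<noteq> {}" and SM: "card S \<le> M"
    show "8 * card S \<le> card (Nb adj S - R)"
    proof (rule ccontr)
      assume bad: "\<not> 8 * card S \<le> card (Nb adj S - R)"
      have fS: "finite S" using SV fV finite_subset by blast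
      have cS: "0 < card S" using fS Sne by (simp add: card_gt_0_iff)
      define R' where "R' = R \<union> S"
      have cR': "card R' = card R + card S" unfolding R'_def
        by (rule card_Un_disjoint) (use fR fS SV in auto)
      have R'V: "R' \<subseteq> P \<union> Q" using RV SV unfolding R'_def by blast
      have fNR: "finite (Nb adj R)" "finite (Nb adj S)"
        using nb_sub[OF bg] fV finite_subset by blast+
      have "Nb adj R' - R' \<subseteq> (Nb adj R - R) \<union> (Nb adj S - R)"
        unfolding R'_def nb_Un by blast
      then have "card (Nb adj R' - R') \<le> card ((Nb adj R - R) \<union> (Nb adj S - R))"
        by (rule card_mono[rotated]) (use fNR in auto)
      also have "\<dots> \<le> card (Nb adj R - R) + card (Nb adj S - R)" by (rule card_Un_le)
      finally have lt: "card (Nb adj R' - R') < 8 * card R'" using eR bad cR' by linarith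
      have "card R' < 2*M"
      proof (rule ccontr)
        assume "\<not> card R' < 2*M"
        then have "2*M \<le> card R'" by simp
        then have big: "N < card (Nb adj R') + M" using big_set_nb[OF bg fP fQ dn NP NQ R'V] by blast
        have "card (Nb adj R') - card R' \<le> card (Nb adj R' - R')"
          by (rule diff_card_le_card_Diff) (use fR fS in \<open>auto simp: R'_def\<close>)
        moreover have "card R' < 3*M" using cR' cR SM by linarith
        ultimately show False using big lt NM by linarith
      qed
      then have "Good R'" unfolding Good_def using R'V lt by simp
      then have "card R' \<le> card R" using Rmax by blast
      then show False using cR' cS by linarith
    qed
  qed
  then show ?thesis using RV cR by blast
qed

lemma dfs:
  assumes bg: "bipg adj P Q" and fP: "finite P" and fQ: "finite Q" and dn: "dense adj M P Q"
    and WV: "W \<subseteq> P \<union> Q" and KP: "K \<le> card (W \<inter> P)" and KQ: "K \<le> card (W \<inter> Q)"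
    and K2: "2*M < K"
  shows "\<exists>T. set T \<subseteq> W \<and> distinct T \<and> successively adj T \<and> K \<le> length T + 3*M"
proof -
  have fW: "finite W" using WV fP fQ finite_subset by blast
  define Val where "Val x \<longleftrightarrow> (case x of (S, T) \<Rightarrow> S \<subseteq> W \<and> set T \<subseteq> W \<and> distinct T \<and>
      S \<inter> set T = {} \<and> successively adj T \<and> card S \<le> 2*M \<and>
      (\<forall>s\<in>S. \<forall>u\<in>W - S - set T. \<not> adj s u))" for x :: "'a set \<times> 'a list"
  define f where "f x = 2 * card (fst x) + length (snd x)" for x :: "'a set \<times> 'a list"
  have "Val ({}, [])" unfolding Val_def by simp
  moreover have "\<forall>x. Val x \<longrightarrow> f x < 3 * card W + 1"
  proof (intro allI impI)
    fix x assume "Val x"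
    then obtain S T where x: "x = (S, T)" "S \<subseteq> W" "set T \<subseteq> W" "distinct T"
      unfolding Val_def by (cases x) auto
    have "card S \<le> card W" using x(2) fW by (rule card_mono[rotated])
    moreover have "length T \<le> card W" using x(3,4) fW
      by (metis card_mono distinct_card)
    ultimately show "f x < 3 * card W + 1" unfolding f_def x by simp
  qed
  ultimately obtain x where vx: "Val x" and xmax: "\<forall>y. Val y \<longrightarrow> f y \<le> f x"
    using ex_has_greatest_nat[of Val "({}, [])" f "3 * card W + 1"] by blast
  obtain S T where x: "x = (S, T)" by (cases x)
  have SW: "S \<subseteq> W" and TW: "set T \<subseteq> W" and dT: "distinct T" and ST: "S \<inter> set T = {}"
    and sT: "successively adj T" and cS: "card S \<le> 2*M"
    and noe: "\<forall>s\<in>S. \<forall>u\<in>W - S - set T. \<not> adj s u"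
    using vx unfolding Val_def x by auto
  have fS: "finite S" using SW fW finite_subset by blast
  define U where "U = W - S - set T"
  show ?thesis
  proof (cases "T = []")
    case True
    have "U \<noteq> {}"
    proof
      assume "U = {}"
      then have "W = S" using SW True unfolding U_def by auto
      then have "card W \<le> 2*M" using cS by simp
      moreover have "card (W \<inter> P) \<le> card W" by (rule card_mono[OF fW]) blast
      ultimately show False using KP K2 by linarith
    qed
    then obtain u where u: "u \<in> U" by blast
    have "Val (S, [u])" unfolding Val_def using SW cS noe u True unfolding U_def by auto
    then have "f (S, [u]) \<le> f x" using xmax by blast
    then show ?thesis unfolding f_def x True by simp
  next
    case False
    define v where "v = last T"
    have vT: "v \<in> set T" using False unfolding v_def by simp
    show ?thesis
    proof (cases "\<exists>u\<in>U. adj v u")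
      case True
      then obtain u where u: "u \<in> U" "adj v u" by blast
      have "Val (S, T @ [u])" unfolding Val_def using SW TW dT ST sT cS noe u False
        unfolding U_def v_def by (auto simp: successively_append_iff)
      then have "f (S, T @ [u]) \<le> f x" using xmax by blast
      then show ?thesis unfolding f_def x by simp
    next
      case nadj: False
      have Tsplit: "T = butlast T @ [v]" using False unfolding v_def by simp
      have setb: "set (butlast T) = set T - {v}"
      proof -
        have "distinct (butlast T @ [v])" using dT Tsplit by simp
        then have "v \<notin> set (butlast T)" by simp
        moreover have "set T = insert v (set (butlast T))" using Tsplit
          by (metis Un_insert_right append.right_neutral list.simps(15) set_append)
        ultimately show ?thesis by blast
      qed
      have vS: "v \<notin> S" using ST vT by blast
      show ?thesis
      proof (cases "card (insert v S) \<le> 2*M")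
        case True
        have sb: "successively adj (butlast T)" using sT Tsplit
          by (metis successively_append_iff)
        have "W - insert v S - set (butlast T) = U" unfolding U_def setb using vT by blast
        then have "Val (insert v S, butlast T)" unfolding Val_def
          using SW TW dT ST sb True noe nadj vT setb unfolding U_def
          by (auto simp: distinct_butlast)
        then have "f (insert v S, butlast T) \<le> f x" using xmax by blast
        then show ?thesis unfolding f_def x using fS vS False by simp
      next
        case False
        then have cS2: "card S = 2*M" using cS fS vS by simp
        have "S = (S \<inter> P) \<union> (S \<inter> Q)" using SW WV by blast
        moreover have "(S \<inter> P) \<inter> (S \<inter> Q) = {}" using bg unfolding bipg_def by blast
        ultimately have "card S = card (S \<inter> P) + card (S \<inter> Q)"
          using fS by (metis card_Un_disjoint finite_Int)
        then have side: "M \<le> card (S \<inter> P) \<or> M \<le> card (S \<inter> Q)" using cS2 by linarith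
        have fU: "finite U" using fW unfolding U_def by blast
        have cover: "\<And>Z. card (W \<inter> Z) \<le> card (S \<inter> Z) + card (U \<inter> Z) + length T"
        proof -
          fix Z
          have "W \<inter> Z \<subseteq> (S \<inter> Z) \<union> (U \<inter> Z) \<union> set T" unfolding U_def by blast
          then have "card (W \<inter> Z) \<le> card ((S \<inter> Z) \<union> (U \<inter> Z) \<union> set T)"
            by (rule card_mono[rotated]) (use fS fU in auto)
          also have "\<dots> \<le> card (S \<inter> Z) + card (U \<inter> Z) + card (set T)"
            by (metis add_le_mono1 card_Un_le le_trans)
          finally show "card (W \<inter> Z) \<le> card (S \<inter> Z) + card (U \<inter> Z) + length T"
            using distinct_card[OF dT] by simp
        qed
        have cSZ: "\<And>Z. card (S \<inter> Z) \<le> 2*M" using cS2 fS by (metis card_mono inf_le1)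
        from side show ?thesis
        proof
          assume h: "M \<le> card (S \<inter> P)"
          have "card (U \<inter> Q) < M"
          proof (rule ccontr)
            assume "\<not> card (U \<inter> Q) < M"
            then obtain a b where "a \<in> S \<inter> P" "b \<in> U \<inter> Q" "adj a b"
              using dn h unfolding dense_def by (meson inf_le2 not_less)
            then show False using noe unfolding U_def by blast
          qed
          then show ?thesis using cover[of Q] cSZ[of Q] KQ TW dT sT by (intro exI[of _ T]) auto
        next
          assume h: "M \<le> card (S \<inter> Q)"
          have "card (U \<inter> P) < M"
          proof (rule ccontr)
            assume "\<not> card (U \<inter> P) < M"
            then obtain a b where "a \<in> S \<inter> Q" "b \<in> U \<inter> P" "adj a b"
              using dense_swap[OF bg dn] h unfolding dense_def by (meson inf_le2 not_less)
            then show False using noe unfolding U_def by blast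
          qed
          then show ?thesis using cover[of P] cSZ[of P] KP TW dT sT by (intro exI[of _ T]) auto
        qed
      qed
    qed
  qed
qed

lemma succ_take_drop: "successively R p \<Longrightarrow> successively R (take n (drop m p))"
  unfolding successively_conv_nth by (auto simp: nth_take nth_drop add.commute[of m])

lemma window:
  assumes bg: "bipg adj P Q" and dn: "dense adj M P Q" and M1: "1 \<le> M"
    and AP: "A \<subseteq> P" and BQ: "B \<subseteq> Q" and cA: "M \<le> card A" and cB: "M \<le> card B"
    and sp: "successively adj p" and dp: "distinct p"
    and r: "odd r" "3 \<le> r" and len: "4*M + r \<le> length p"
  shows "\<exists>a\<in>A. \<exists>b\<in>B. \<exists>seg. length seg = r - 1 \<and> set seg \<subseteq> set p \<and> distinct seg \<and>
     successively adj seg \<and> adj a (hd seg) \<and> adj (last seg) b"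
proof -
  have pne: "p \<noteq> []" using len r by auto
  have "adj (p ! 0) (p ! 1)" using successively_nth[OF sp, of 0] len r by simp
  then have h0: "hd p \<in> P \<or> hd p \<in> Q" using bg pne unfolding bipg_def by (auto simp: hd_conv_nth)
  obtain e :: nat where e: "e \<le> 1" and side: "\<And>i. i < length p \<Longrightarrow> p ! i \<in> (if even (i + e) then P else Q)"
  proof (cases "hd p \<in> P")
    case True
    show ?thesis by (rule that[of 0]) (use alt_side[OF bg sp pne True] in auto)
  next
    case False
    then have "hd p \<in> Q" using h0 by blast
    note H = alt_side[OF bipg_swap[OF bg] sp pne this]
    show ?thesis
    proof (rule that[of 1])
      fix i assume "i < length p"
      from H[OF this] show "p ! i \<in> (if even (i + 1) then P else Q)" by auto
    qed simp
  qed
  define g where "g i = 2*i + (1 - e)" for i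
  have gl: "\<And>i. i < 2*M \<Longrightarrow> g i + r - 1 < length p" using len e unfolding g_def by auto
  have gQ: "\<And>i. i < 2*M \<Longrightarrow> p ! (g i) \<in> Q"
  proof -
    fix i assume "i < 2*M"
    then have "g i < length p" using gl r by fastforce
    from side[OF this] show "p ! (g i) \<in> Q" using e unfolding g_def
      by (cases e) auto
  qed
  have gP: "\<And>i. i < 2*M \<Longrightarrow> p ! (g i + (r - 2)) \<in> P"
  proof -
    fix i assume "i < 2*M"
    then have "g i + (r - 2) < length p" using gl r by fastforce
    from side[OF this] show "p ! (g i + (r - 2)) \<in> P" using e r unfolding g_def
      by (cases e) auto
  qed
  have ginj: "inj_on g {..<2*M}" unfolding g_def inj_on_def by auto
  have inj1: "inj_on (\<lambda>i. p ! g i) {..<2*M}"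
  proof (rule inj_onI)
    fix i j assume ij: "i \<in> {..<2*M}" "j \<in> {..<2*M}" "p ! g i = p ! g j"
    have "g i < length p" "g j < length p" using gl[of i] gl[of j] ij(1,2) r by auto
    then have "g i = g j" using ij(3) dp nth_eq_iff_index_eq by blast
    then show "i = j" using ginj ij(1,2) unfolding inj_on_def by blast
  qed
  have inj2: "inj_on (\<lambda>i. p ! (g i + (r - 2))) {..<2*M}"
  proof (rule inj_onI)
    fix i j assume ij: "i \<in> {..<2*M}" "j \<in> {..<2*M}" "p ! (g i + (r - 2)) = p ! (g j + (r - 2))"
    have "g i + (r - 2) < length p" "g j + (r - 2) < length p" using gl[of i] gl[of j] ij(1,2) r by auto
    then have "g i + (r - 2) = g j + (r - 2)" using ij(3) dp nth_eq_iff_index_eq by blast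
    then have "g i = g j" by simp
    then show "i = j" using ginj ij(1,2) unfolding inj_on_def by blast
  qed
  define BA where "BA = {i\<in>{..<2*M}. \<not> (\<exists>a\<in>A. adj a (p ! g i))}"
  define BB where "BB = {i\<in>{..<2*M}. \<not> (\<exists>b\<in>B. adj (p ! (g i + (r - 2))) b)}"
  have cBA: "card BA < M"
  proof (rule ccontr)
    assume "\<not> card BA < M"
    moreover have "card ((\<lambda>i. p ! g i) ` BA) = card BA"
      by (rule card_image) (rule inj_on_subset[OF inj1], auto simp: BA_def)
    moreover have "(\<lambda>i. p ! g i) ` BA \<subseteq> Q" using gQ unfolding BA_def by auto
    ultimately obtain a x where "a \<in> A" "x \<in> (\<lambda>i. p ! g i) ` BA" "adj a x"
      using dn AP cA unfolding dense_def by (metis not_less)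
    then show False unfolding BA_def by auto
  qed
  have cBB: "card BB < M"
  proof (rule ccontr)
    assume "\<not> card BB < M"
    moreover have "card ((\<lambda>i. p ! (g i + (r - 2))) ` BB) = card BB"
      by (rule card_image) (rule inj_on_subset[OF inj2], auto simp: BB_def)
    moreover have "(\<lambda>i. p ! (g i + (r - 2))) ` BB \<subseteq> P" using gP unfolding BB_def by auto
    ultimately obtain x b where "x \<in> (\<lambda>i. p ! (g i + (r - 2))) ` BB" "b \<in> B" "adj x b"
      using dn BQ cB unfolding dense_def by (metis not_less)
    then show False unfolding BB_def by auto
  qed
  have "card (BA \<union> BB) < 2*M" using card_Un_le[of BA BB] cBA cBB by linarith
  moreover have "finite (BA \<union> BB)" unfolding BA_def BB_def by auto
  ultimately have "\<not> {..<2*M} \<subseteq> BA \<union> BB"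
    using card_mono[of "BA \<union> BB" "{..<2*M}"] by auto
  then obtain i where i: "i < 2*M" "i \<notin> BA" "i \<notin> BB" by blast
  then obtain a b where ab: "a \<in> A" "adj a (p ! g i)" "b \<in> B" "adj (p ! (g i + (r - 2))) b"
    unfolding BA_def BB_def by auto
  define seg where "seg = take (r - 1) (drop (g i) p)"
  have gi: "g i + r - 1 < length p" using gl i by blast
  have lseg: "length seg = r - 1" unfolding seg_def using gi by auto
  have hs: "hd seg = p ! g i" unfolding seg_def using gi r
    by (simp add: hd_conv_nth nth_take nth_drop)
  have ls: "last seg = p ! (g i + (r - 2))" unfolding seg_def using gi r
    by (simp add: last_conv_nth nth_take nth_drop) (simp add: numeral_2_eq_2)
  have "set seg \<subseteq> set p" unfolding seg_def
    by (meson order.trans set_drop_subset set_take_subset)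
  moreover have "distinct seg" unfolding seg_def using dp by simp
  moreover have "successively adj seg" unfolding seg_def using sp by (rule succ_take_drop)
  ultimately show ?thesis using lseg hs ls ab by metis
qed

lemma succ_rev_sym: "bipg adj P Q \<Longrightarrow> successively adj xs \<Longrightarrow> successively adj (rev xs)"
  unfolding bipg_def by (simp add: successively_mono[of adj xs])

lemma assemble:
  assumes bg: "bipg adj P Q"
    and xa: "length xa = Suc j" "hd xa = a" "last xa = a'" "distinct xa" "set xa \<subseteq> Fa" "successively adj xa"
    and xb: "length xb = Suc j" "hd xb = b" "last xb = b'" "distinct xb" "set xb \<subseteq> Fb" "successively adj xb"
    and dj: "Fa \<inter> Fb = {}" and seg: "distinct seg" "set seg \<inter> (Fa \<union> Fb) = {}"
       "successively adj (a' # seg @ [b'])" "length seg = r"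
    and ab: "adj a b"
  shows "\<exists>cyc. length cyc = 2*j + 2 + r \<and> distinct cyc \<and> successively adj cyc \<and> adj (last cyc) (hd cyc)"
proof -
  define cyc where "cyc = xa @ seg @ rev xb"
  have nea: "xa \<noteq> []" and neb: "xb \<noteq> []" using xa(1) xb(1) by auto
  have "length cyc = 2*j + 2 + r" unfolding cyc_def using xa(1) xb(1) seg(4) by simp
  moreover have "distinct cyc" unfolding cyc_def using xa(4,5) xb(4,5) dj seg(1,2) by auto
  moreover have "successively adj cyc"
  proof -
    have s1: "successively adj (rev xb)" by (rule succ_rev_sym[OF bg xb(6)])
    have hr: "hd (rev xb) = b'" using neb xb(3) by (simp add: hd_rev)
    have "successively adj (seg @ rev xb) \<and> (seg \<noteq> [] \<longrightarrow> adj a' (hd seg)) \<and> (seg = [] \<longrightarrow> adj a' b')"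
    proof (cases "seg = []")
      case True
      then show ?thesis using seg(3) s1 by simp
    next
      case False
      then have "adj a' (hd seg)" "successively adj seg" "adj (last seg) b'"
        using seg(3) by (auto simp: successively_Cons successively_append_iff)
      then show ?thesis using s1 hr False neb by (auto simp: successively_append_iff)
    qed
    then show ?thesis unfolding cyc_def using xa(3,6) nea neb hr
      by (cases "seg = []") (auto simp: successively_append_iff)
  qed
  moreover have "adj (last cyc) (hd cyc)"
  proof -
    have "last cyc = b" unfolding cyc_def using neb xb(2) by (simp add: last_rev)
    moreover have "hd cyc = a" unfolding cyc_def using nea xa(2) by simp
    ultimately show ?thesis using ab bg unfolding bipg_def by metis
  qed
  ultimately show ?thesis by blast
qed

lemma tree_path_side:
  assumes bg: "bipg adj P Q" and t: "tree adj a j A F" and aP: "a \<in> P" and u: "u \<in> A"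
  shows "u \<in> (if even j then P else Q)"
proof -
  obtain xs where xs: "length xs = Suc j" "hd xs = a" "last xs = u" "successively adj xs"
    using t u unfolding tree_def by blast
  have ne: "xs \<noteq> []" using xs(1) by auto
  have "last xs = xs ! j" using xs(1) ne by (simp add: last_conv_nth)
  then show ?thesis using alt_side[OF bg xs(4) ne _, of j] xs aP by simp
qed

lemma mid:
  assumes bg: "bipg adj P Q" and fP: "finite P" and fQ: "finite Q" and dn: "dense adj M P Q"
    and M1: "1 \<le> M" and AP: "A \<subseteq> P" and BQ: "B \<subseteq> Q" and cA: "M \<le> card A" and cB: "M \<le> card B"
    and WV: "W \<subseteq> P \<union> Q" and KP: "73*M \<le> card (W \<inter> P)" and KQ: "73*M \<le> card (W \<inter> Q)"
    and r: "odd r" and rM: "r \<le> M"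
  shows "\<exists>a'\<in>A. \<exists>b'\<in>B. \<exists>seg. length seg = r - 1 \<and> set seg \<subseteq> W \<and> distinct seg \<and>
           successively adj (a' # seg @ [b'])"
proof (cases "r = 1")
  case True
  then obtain a' b' where "a' \<in> A" "b' \<in> B" "adj a' b'" using dn AP BQ cA cB unfolding dense_def by blast
  then show ?thesis using True by (intro bexI[of _ a'] bexI[of _ b'] exI[of _ "[]"]) auto
next
  case False
  then have r3: "3 \<le> r" using r by presburger
  obtain T where T: "set T \<subseteq> W" "distinct T" "successively adj T" "73*M \<le> length T + 3*M"
    using dfs[OF bg fP fQ dn WV KP KQ] M1 by auto
  have "4*M + r \<le> length T" using T(4) rM by linarith
  from window[OF bg dn M1 AP BQ cA cB T(3) T(2) r r3 this]
  obtain a' b' seg where w: "a' \<in> A" "b' \<in> B" "length seg = r - 1" "set seg \<subseteq> set T" "distinct seg"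
    "successively adj seg" "adj a' (hd seg)" "adj (last seg) b'" by blast
  have "seg \<noteq> []" using w(3) r3 by auto
  then have "successively adj (a' # seg @ [b'])" using w(6,7,8)
    by (auto simp: successively_Cons successively_append_iff)
  then show ?thesis using w T(1) by blast
qed

lemma key:
  assumes bg: "bipg adj P Q" and fP: "finite P" and fQ: "finite Q" and dn: "dense adj M P Q"
    and cP: "81*M \<le> card P" and cQ: "81*M \<le> card Q" and M1: "1 \<le> M" and k1: "1 \<le> k"
    and Mk: "M \<le> 2^(k-1)" and kM: "2*k \<le> M"
  shows "\<exists>cyc. length cyc = 2*k \<and> distinct cyc \<and> successively adj cyc \<and> adj (last cyc) (hd cyc)"
proof -
  have fV: "finite (P \<union> Q)" using fP fQ by blast
  obtain R where R: "R \<subseteq> P \<union> Q" "card R < 2*M" "expd adj M (P \<union> Q) R"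
    using clean[OF bg fP fQ dn cP cQ _ M1] by auto
  have fR: "finite R" using R(1) fV finite_subset by blast
  have "card P - card R \<le> card (P - R)" by (rule diff_card_le_card_Diff[OF fR])
  then have cPR: "M \<le> card (P - R)" using cP R(2) by linarith
  have "card Q - card R \<le> card (Q - R)" by (rule diff_card_le_card_Diff[OF fR])
  then have cQR: "M \<le> card (Q - R)" using cQ R(2) by linarith
  obtain a b where ab: "a \<in> P - R" "b \<in> Q - R" "adj a b"
    using dn cPR cQR unfolding dense_def by (meson Diff_subset)
  obtain j A B Fa Fb where g: "j \<le> k - 1" "tree adj a j A Fa" "tree adj b j B Fb"
      "card A = M" "card B = M" "card Fa \<le> 3*M" "card Fb \<le> 3*M"
      "Fa \<inter> Fb = {}" "Fa \<subseteq> P \<union> Q - R" "Fb \<subseteq> P \<union> Q - R"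
    using grow_final[OF bg fV R(3) ab(1,2) M1 Mk] by blast
  have fFa: "finite Fa" and fFb: "finite Fb" using g(9,10) fV finite_subset by blast+
  define W where "W = P \<union> Q - R - Fa - Fb"
  have WV: "W \<subseteq> P \<union> Q" unfolding W_def by blast
  have cX: "card (R \<union> Fa \<union> Fb) \<le> 8*M"
    using card_Un_le[of "R \<union> Fa" Fb] card_Un_le[of R Fa] R(2) g(6,7) by linarith
  have fX: "finite (R \<union> Fa \<union> Fb)" using fR fFa fFb by blast
  have KP: "73*M \<le> card (W \<inter> P)"
  proof -
    have "W \<inter> P = P - (R \<union> Fa \<union> Fb)" unfolding W_def by blast
    moreover have "card P - card (R \<union> Fa \<union> Fb) \<le> card (P - (R \<union> Fa \<union> Fb))"
      by (rule diff_card_le_card_Diff[OF fX])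
    ultimately have "card P - card (R \<union> Fa \<union> Fb) \<le> card (W \<inter> P)" by simp
    then show ?thesis using cP cX by linarith
  qed
  have KQ: "73*M \<le> card (W \<inter> Q)"
  proof -
    have "W \<inter> Q = Q - (R \<union> Fa \<union> Fb)" unfolding W_def by blast
    moreover have "card Q - card (R \<union> Fa \<union> Fb) \<le> card (Q - (R \<union> Fa \<union> Fb))"
      by (rule diff_card_le_card_Diff[OF fX])
    ultimately have "card Q - card (R \<union> Fa \<union> Fb) \<le> card (W \<inter> Q)" by simp
    then show ?thesis using cQ cX by linarith
  qed
  define r where "r = 2*k - 1 - 2*j"
  have "r = 2*(k - 1 - j) + 1" unfolding r_def using g(1) k1 by linarith
  then have rodd: "odd r" by simp
  have rM: "r \<le> M" unfolding r_def using kM by linarith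
  have aP: "a \<in> P" and bQ: "b \<in> Q" using ab by auto
  have Aside: "A \<subseteq> (if even j then P else Q)" using tree_path_side[OF bg g(2) aP] by blast
  have Bside: "B \<subseteq> (if even j then Q else P)" using tree_path_side[OF bipg_swap[OF bg] g(3) bQ] by blast
  have "\<exists>a'\<in>A. \<exists>b'\<in>B. \<exists>seg. length seg = r - 1 \<and> set seg \<subseteq> W \<and> distinct seg \<and>
           successively adj (a' # seg @ [b'])"
  proof (cases "even j")
    case True
    then show ?thesis using mid[OF bg fP fQ dn M1 _ _ _ _ WV KP KQ rodd rM, of A B] Aside Bside g(4,5) by simp
  next
    case False
    have WV': "W \<subseteq> Q \<union> P" using WV by blast
    show ?thesis using mid[OF bipg_swap[OF bg] fQ fP dense_swap[OF bg dn] M1 _ _ _ _ WV' KQ KP rodd rM, of A B]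
      Aside Bside g(4,5) False by simp
  qed
  then obtain a' b' seg where m: "a' \<in> A" "b' \<in> B" "length seg = r - 1" "set seg \<subseteq> W" "distinct seg"
    "successively adj (a' # seg @ [b'])" by blast
  obtain xa where xa: "length xa = Suc j" "hd xa = a" "last xa = a'" "distinct xa" "set xa \<subseteq> Fa" "successively adj xa"
    using g(2) m(1) unfolding tree_def by blast
  obtain xb where xb: "length xb = Suc j" "hd xb = b" "last xb = b'" "distinct xb" "set xb \<subseteq> Fb" "successively adj xb"
    using g(3) m(2) unfolding tree_def by blast
  have sd: "set seg \<inter> (Fa \<union> Fb) = {}" using m(4) unfolding W_def by blast
  from assemble[OF bg xa xb g(8) m(5) sd m(6) m(3) ab(3)]
  obtain cyc where c: "length cyc = 2*j + 2 + (r - 1)" "distinct cyc" "successively adj cyc" "adj (last cyc) (hd cyc)"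
    by blast
  have "2*j + 2 + (r - 1) = 2*k" unfolding r_def using g(1) k1 by linarith
  then have "length cyc = 2*k" using c(1) by simp
  then show ?thesis using c by blast
qed

definition adjE :: "(nat \<Rightarrow> nat \<Rightarrow> bool) \<Rightarrow> nat + nat \<Rightarrow> nat + nat \<Rightarrow> bool" where
  "adjE E u v = (case u of Inl x \<Rightarrow> (case v of Inr y \<Rightarrow> E x y | Inl _ \<Rightarrow> False)
                         | Inr y \<Rightarrow> (case v of Inl x \<Rightarrow> E x y | Inr _ \<Rightarrow> False))"

lemma bipg_adjE:
  assumes "\<And>x y. E x y \<Longrightarrow> x \<in> A \<and> y \<in> B"
  shows "bipg (adjE E) (Inl ` A) (Inr ` B)"
  unfolding bipg_def adjE_def using assms by (auto split: sum.splits)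

lemma col_adjE:
  assumes "\<And>x y. E x y \<Longrightarrow> x < b \<and> y < b \<and> c x y = k" "adjE E u v"
  shows "col_adj c b k u v"
  using assms unfolding adjE_def col_adj_def by (auto split: sum.splits)

lemma color_step:
  fixes c :: "nat \<Rightarrow> nat \<Rightarrow> nat"
  assumes Ab: "A \<subseteq> {..<b}" and Bb: "B \<subseteq> {..<b}" and cA: "card A = 81*M" and cB: "card B = 81*M"
    and M1: "1 \<le> M" and cs: "\<forall>x\<in>A. \<forall>y\<in>B. s \<le> c x y" and k1: "1 \<le> k"
    and Mk: "M \<le> 2^(k-1)" and kM: "2*k \<le> M"
  shows "has_mono_cycle c b s (2*k) \<or> (\<exists>A' B'. A' \<subseteq> {..<b} \<and> B' \<subseteq> {..<b} \<and> card A' = M \<and>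
           card B' = M \<and> (\<forall>x\<in>A'. \<forall>y\<in>B'. Suc s \<le> c x y))"
proof -
  define E where "E x y \<longleftrightarrow> x \<in> A \<and> y \<in> B \<and> c x y = s" for x y
  have EAB: "\<And>x y. E x y \<Longrightarrow> x \<in> A \<and> y \<in> B" unfolding E_def by blast
  note bg = bipg_adjE[of E A B, OF EAB]
  have fA: "finite A" and fB: "finite B" using Ab Bb finite_subset by blast+
  have fP: "finite (Inl ` A :: (nat + nat) set)" and fQ: "finite (Inr ` B :: (nat + nat) set)"
    using fA fB by auto
  have cP: "card (Inl ` A :: (nat + nat) set) = 81*M" using cA by (simp add: card_image)
  have cQ: "card (Inr ` B :: (nat + nat) set) = 81*M" using cB by (simp add: card_image)
  show ?thesis
  proof (cases "dense (adjE E) M (Inl ` A) (Inr ` B)")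
    case True
    obtain cyc where cyc: "length cyc = 2*k" "distinct cyc" "successively (adjE E) cyc"
        "adjE E (last cyc) (hd cyc)"
      using key[OF bg fP fQ True _ _ M1 k1 Mk kM] cP cQ by auto
    have k2: "2 \<le> k"
    proof (rule ccontr)
      assume "\<not> 2 \<le> k"
      then have "k = 1" using k1 by simp
      then show False using Mk kM by simp
    qed
    have Eb: "\<And>x y. E x y \<Longrightarrow> x < b \<and> y < b \<and> c x y = s" unfolding E_def using Ab Bb by auto
    have "has_mono_cycle c b s (2*k)"
      unfolding has_mono_cycle_def
    proof (intro conjI exI[of _ "nth cyc"])
      show "3 \<le> 2*k" using k2 by simp
      show "inj_on (nth cyc) {..<2*k}" by (rule inj_on_nth) (use cyc(1,2) in simp_all)
      show "\<forall>j<2*k. col_adj c b s (cyc ! j) (cyc ! (Suc j mod (2*k)))"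
      proof (intro allI impI)
        fix j assume j: "j < 2*k"
        show "col_adj c b s (cyc ! j) (cyc ! (Suc j mod (2*k)))"
        proof (cases "Suc j < 2*k")
          case True
          then have "adjE E (cyc ! j) (cyc ! Suc j)" using successively_nth[OF cyc(3)] cyc(1) by simp
          then show ?thesis using True col_adjE[OF Eb] by simp
        next
          case False
          then have jj: "Suc j = 2*k" using j by simp
          have ne: "cyc \<noteq> []" using cyc(1) k1 by auto
          have "length cyc - 1 = j" using jj cyc(1) by simp
          then have "last cyc = cyc ! j" using ne by (simp add: last_conv_nth)
          moreover have "hd cyc = cyc ! 0" using ne by (simp add: hd_conv_nth)
          ultimately have "adjE E (cyc ! j) (cyc ! 0)" using cyc(4) by simp
          then show ?thesis using jj col_adjE[OF Eb] by simp
        qed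
      qed
    qed
    then show ?thesis by blast
  next
    case False
    then obtain AA BB where AB: "AA \<subseteq> Inl ` A" "BB \<subseteq> Inr ` B" "M \<le> card AA" "M \<le> card BB"
        "\<forall>a\<in>AA. \<forall>b\<in>BB. \<not> adjE E a b"
      unfolding dense_def by blast
    define A1 where "A1 = {x. Inl x \<in> AA}"
    define B1 where "B1 = {y. Inr y \<in> BB}"
    have "AA = Inl ` A1" using AB(1) unfolding A1_def by auto
    then have cA1: "M \<le> card A1" using AB(3) by (simp add: card_image)
    have "BB = Inr ` B1" using AB(2) unfolding B1_def by auto
    then have cB1: "M \<le> card B1" using AB(4) by (simp add: card_image)
    obtain A' where A': "A' \<subseteq> A1" "card A' = M" using obtain_subset_with_card_n[OF cA1] by metis
    obtain B' where B': "B' \<subseteq> B1" "card B' = M" using obtain_subset_with_card_n[OF cB1] by metis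
    have A1A: "A1 \<subseteq> A" using AB(1) unfolding A1_def by auto
    have B1B: "B1 \<subseteq> B" using AB(2) unfolding B1_def by auto
    have "\<forall>x\<in>A'. \<forall>y\<in>B'. Suc s \<le> c x y"
    proof (intro ballI)
      fix x y assume x: "x \<in> A'" and y: "y \<in> B'"
      then have "\<not> adjE E (Inl x) (Inr y)" using AB(5) A' B' unfolding A1_def B1_def by auto
      then have "c x y \<noteq> s" using x y A' B' A1A B1B unfolding adjE_def E_def by auto
      moreover have "s \<le> c x y" using cs x y A' B' A1A B1B by blast
      ultimately show "Suc s \<le> c x y" by simp
    qed
    moreover have "A' \<subseteq> {..<b}" "B' \<subseteq> {..<b}" using A' B' A1A B1B Ab Bb by auto
    ultimately show ?thesis using A'(2) B'(2) by (intro disjI2 exI[of _ A'] exI[of _ B']) simp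
  qed
qed


lemma log_bound:
  fixes X k :: nat
  assumes X1: "1 \<le> X" and h: "2 * \<lceil>log 2 (real X)\<rceil> + 1 \<le> int (2*k)"
  shows "X \<le> 2^(k-1)"
proof -
  define L where "L = \<lceil>log 2 (real X)\<rceil>"
  have h': "2 * L + 1 \<le> 2 * int k" using h unfolding L_def by simp
  have c: "L \<le> int k - 1" using h' by presburger
  have l0: "0 \<le> log 2 (real X)" using X1 by simp
  have "log 2 (real X) \<le> of_int L" unfolding L_def by (rule le_of_int_ceiling)
  also have "\<dots> \<le> real k - 1" using c by linarith
  finally have lk: "log 2 (real X) \<le> real k - 1" .
  then have k1: "1 \<le> k" using l0 by linarith
  then have e: "real (k - 1) = real k - 1" by (simp add: of_nat_diff)
  have lk': "log 2 (real X) \<le> real (k - 1)" unfolding e by (rule lk)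
  have "real X = 2 powr (log 2 (real X))" using X1 by simp
  also have "\<dots> \<le> 2 powr (real (k - 1))" using lk' by (intro powr_mono) auto
  also have "\<dots> = 2^(k-1)" by (simp add: powr_realpow)
  finally have "real X \<le> real (2^(k-1))" by simp
  then show ?thesis by linarith
qed
lemma stage:
  fixes c :: "nat \<Rightarrow> nat \<Rightarrow> nat" and t m :: nat and n :: "nat \<Rightarrow> nat"
  assumes t1: "t \<ge> 1" and m1: "m \<ge> 1"
    and hn: "\<forall>i<t. n i \<ge> 1 \<and> even (n i) \<and> m \<ge> n i \<and>
           int (n i) \<ge> 2 * \<lceil>log 2 (real (81 ^ (t - 1) * m))\<rceil> + 1"
  shows "s \<le> t \<Longrightarrow> (\<exists>i<s. has_mono_cycle c (81^t*m) i (n i)) \<or>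
     (\<exists>A B. A \<subseteq> {..<81^t*m} \<and> B \<subseteq> {..<81^t*m} \<and> card A = 81^(t-s)*m \<and> card B = 81^(t-s)*m \<and>
        (\<forall>x\<in>A. \<forall>y\<in>B. s \<le> c x y))"
proof (induction s)
  case 0
  then show ?case by (intro disjI2 exI[of _ "{..<81^t*m}"]) auto
next
  case (Suc s)
  then have st: "s < t" by simp
  have IH: "(\<exists>i<s. has_mono_cycle c (81^t*m) i (n i)) \<or>
     (\<exists>A B. A \<subseteq> {..<81^t*m} \<and> B \<subseteq> {..<81^t*m} \<and> card A = 81^(t-s)*m \<and> card B = 81^(t-s)*m \<and>
        (\<forall>x\<in>A. \<forall>y\<in>B. s \<le> c x y))" using Suc.IH st by simp
  show ?case
    using IH
  proof
    assume "\<exists>i<s. has_mono_cycle c (81^t*m) i (n i)"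
    then show ?thesis using less_SucI by blast
  next
    assume "\<exists>A B. A \<subseteq> {..<81^t*m} \<and> B \<subseteq> {..<81^t*m} \<and> card A = 81^(t-s)*m \<and> card B = 81^(t-s)*m \<and>
        (\<forall>x\<in>A. \<forall>y\<in>B. s \<le> c x y)"
    then obtain A B where sets: "A \<subseteq> {..<81^t*m}" "B \<subseteq> {..<81^t*m}" "card A = 81^(t-s)*m" "card B = 81^(t-s)*m"
      "\<forall>x\<in>A. \<forall>y\<in>B. s \<le> c x y" by blast
    define M where "M = 81^(t - Suc s) * m"
    have "t - s = Suc (t - Suc s)" using st by simp
    then have tsM: "81^(t-s)*m = 81*M" unfolding M_def by simp
    have M1: "1 \<le> M" unfolding M_def using m1 by simp
    have hs: "n s \<ge> 1 \<and> even (n s) \<and> m \<ge> n s \<and>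
           int (n s) \<ge> 2 * \<lceil>log 2 (real (81 ^ (t - 1) * m))\<rceil> + 1" using hn st by blast
    obtain k where nk: "n s = 2*k" using hs by blast
    have k1: "1 \<le> k" using hs nk by simp
    have "81^(t - Suc s) \<le> (81::nat)^(t-1)" by (rule power_increasing) (use st in auto)
    then have MX: "M \<le> 81^(t-1)*m" unfolding M_def by simp
    have "81^(t-1)*m \<le> 2^(k-1)"
    proof (rule log_bound)
      show "1 \<le> 81^(t-1)*m" using m1 by simp
      show "2 * \<lceil>log 2 (real (81^(t-1)*m))\<rceil> + 1 \<le> int (2*k)" using hs nk by simp
    qed
    then have Mk: "M \<le> 2^(k-1)" using MX by linarith
    have "m \<le> M" unfolding M_def using m1 by simp
    then have kM: "2*k \<le> M" using hs nk by simp
    from color_step[OF sets(1,2) sets(3)[unfolded tsM] sets(4)[unfolded tsM] M1 sets(5) k1 Mk kM]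
    show ?thesis
    proof
      assume "has_mono_cycle c (81 ^ t * m) s (2 * k)"
      then show ?thesis using nk by (intro disjI1 exI[of _ s]) auto
    next
      assume "\<exists>A' B'. A' \<subseteq> {..<81 ^ t * m} \<and> B' \<subseteq> {..<81 ^ t * m} \<and> card A' = M \<and>
           card B' = M \<and> (\<forall>x\<in>A'. \<forall>y\<in>B'. Suc s \<le> c x y)"
      then show ?thesis unfolding M_def by blast
    qed
  qed
qed

theorem corollary2p5:
  fixes t m :: nat and n :: "nat \<Rightarrow> nat"
  assumes "t \<ge> 1" and "m \<ge> 1"
    and "\<forall>i<t. n i \<ge> 1 \<and> even (n i) \<and> m \<ge> n i \<and>
           int (n i) \<ge> 2 * \<lceil>log 2 (real (81 ^ (t - 1) * m))\<rceil> + 1"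
  shows "BR_cycles_Kmm t n m \<le> 81 ^ t * m"
proof -
  have "BR_arrows t n m (81^t*m)"
    unfolding BR_arrows_def
  proof (intro allI impI)
    fix c :: "nat \<Rightarrow> nat \<Rightarrow> nat"
    assume cb: "\<forall>x<81^t*m. \<forall>y<81^t*m. c x y \<le> t"
    have st: "(\<exists>i<t. has_mono_cycle c (81^t*m) i (n i)) \<or>
     (\<exists>A B. A \<subseteq> {..<81^t*m} \<and> B \<subseteq> {..<81^t*m} \<and> card A = 81^(t-t)*m \<and> card B = 81^(t-t)*m \<and>
        (\<forall>x\<in>A. \<forall>y\<in>B. t \<le> c x y))" by (rule stage[OF assms]) simp
    show "(\<exists>i<t. has_mono_cycle c (81^t*m) i (n i)) \<or> has_mono_Kmm c (81^t*m) t m"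
      using st
    proof
      assume "\<exists>i<t. has_mono_cycle c (81^t*m) i (n i)" then show ?thesis by blast
    next
      assume "\<exists>A B. A \<subseteq> {..<81^t*m} \<and> B \<subseteq> {..<81^t*m} \<and> card A = 81^(t-t)*m \<and> card B = 81^(t-t)*m \<and>
        (\<forall>x\<in>A. \<forall>y\<in>B. t \<le> c x y)"
      then obtain A B where sets0: "A \<subseteq> {..<81^t*m}" "B \<subseteq> {..<81^t*m}" "card A = 81^(t-t)*m" "card B = 81^(t-t)*m"
        "\<forall>x\<in>A. \<forall>y\<in>B. t \<le> c x y" by blast
      then have sets: "A \<subseteq> {..<81^t*m}" "B \<subseteq> {..<81^t*m}" "card A = m" "card B = m"
        "\<forall>x\<in>A. \<forall>y\<in>B. t \<le> c x y" by simp_all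
      have "\<forall>x\<in>A. \<forall>y\<in>B. c x y = t"
      proof (intro ballI)
        fix x y assume "x \<in> A" "y \<in> B"
        then have "x < 81^t*m" "y < 81^t*m" "t \<le> c x y" using sets by auto
        then show "c x y = t" using cb by (simp add: le_antisym)
      qed
      then have "has_mono_Kmm c (81^t*m) t m" unfolding has_mono_Kmm_def using sets by blast
      then show ?thesis by blast
    qed
  qed
  then show ?thesis unfolding BR_cycles_Kmm_def by (rule Least_le)
qed


end
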